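(* Let $s\in\mathbb{R}^2$ with $|s|=1$ and $m=s^\perp$. For every $N\in\mathcal{N}_s\setminus\mathcal{M}_s$ there exist $F,G\in\mathcal{M}_s$ with $\operatorname{rank}(F-G)=1$ and $\mu\in(0,1)$ such that $$N=\mu F+(1-\mu)G\qquad\text{and}\qquad|Nm|=|Fm|=|Gm|.$$
   Context: $m=s^\perp=(-s_2,s_1)$; $\mathcal{M}_s=\{F\in\mathbb{R}^{2\times2}:\det F=1,|Fs|=1\}$; $\mathcal{N}_s=\{F\in\mathbb{R}^{2\times2}:\det F=1,|Fs|\le1\}$. *)

theory Defs
  imports "HOL-Analysis.Analysis"
begin

definition perp :: "real^2 \<Rightarrow> real^2" where
  "perp s = vector [- (s $ 2), s $ 1]"

definition Ms :: "real^2 \<Rightarrow> (real^2^2) set" where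
  "Ms s = {F. det F = 1 \<and> norm (F *v s) = 1}"

definition Ns :: "real^2 \<Rightarrow> (real^2^2) set" where
  "Ns s = {F. det F = 1 \<and> norm (F *v s) \<le> 1}"

end

theory Submission
  imports Defs
begin

lemma root_lem: fixes A B C D :: real
  assumes A0: "A > 0" and sD2: "sqrt D ^ 2 = D" and D: "D = B^2 - 4*A*C"
  and t: "t = (-B - sqrt D) / (2*A) \<or> t = (-B + sqrt D) / (2*A)"
  shows "A * t^2 + B*t + C = 0"
proof -
  have "2*A*t + B = - sqrt D \<or> 2*A*t + B = sqrt D" using t A0 by (auto simp: field_simps)
  hence "(2*A*t + B)^2 = D" using sD2 by auto
  hence "4*A*(A * t^2 + B*t + C) = 0" using D by (simp add: power2_eq_square algebra_simps)
  thus ?thesis using A0 by simp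
qed
lemma Md_lem: fixes N :: "real^2^2" and s :: "real^2" shows
 "det (N + t *\<^sub>R ((\<chi> i j. (N *v perp s)$i * s$j) :: real^2^2)) = det N"
  by (simp add: perp_def det_2 matrix_vector_mult_def sum_2 algebra_simps)

lemma a1: fixes v s :: "real^2" shows "((\<chi> i j. v$i * s$j) :: real^2^2) *v s = (s \<bullet> s) *\<^sub>R v"
    by (simp add: vec_eq_iff forall_2 matrix_vector_mult_def sum_2 inner_vec_def algebra_simps power2_eq_square)
lemma a2: fixes v s :: "real^2" and N :: "real^2^2" shows "(N + t *\<^sub>R ((\<chi> i j. v$i * s$j) :: real^2^2)) *v s = N *v s + t *\<^sub>R ((s$1 ^ 2 + s$2 ^ 2) *\<^sub>R v)"
      by (simp add: vec_eq_iff forall_2 matrix_vector_mult_def sum_2 algebra_simps power2_eq_square)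
lemma a3: fixes v s :: "real^2" and N :: "real^2^2" shows "(N + t *\<^sub>R ((\<chi> i j. v$i * s$j) :: real^2^2)) *v perp s = N *v perp s"
    by (simp add: perp_def vec_eq_iff forall_2 matrix_vector_mult_def sum_2 algebra_simps)

lemma rank_outer:
  fixes v s :: "real^2"
  assumes "v \<noteq> 0" "s \<noteq> 0"
  shows "rank ((\<chi> i j. v$i * s$j) :: real^2^2) = 1"
proof -
  let ?P = "(\<chi> i j. v$i * s$j) :: real^2^2"
  have d: "det ?P = 0" by (simp add: det_2)
  have "?P *v s = (s \<bullet> s) *\<^sub>R v" by (rule a1)
  moreover have "(s \<bullet> s) *\<^sub>R v \<noteq> 0" using assms by simp
  ultimately have "?P \<noteq> 0" by auto
  hence "rank ?P \<noteq> 0" by (simp add: rank_eq_0)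
  moreover have "rank ?P < 2" using d det_eq_0_rank[of ?P] by simp
  ultimately show ?thesis by simp
qed

theorem lemma3p3:
  fixes s :: "real^2" and N :: "real^2^2"
  assumes "norm s = 1"
    and "N \<in> Ns s - Ms s"
  shows "\<exists>F G \<mu>. F \<in> Ms s \<and> G \<in> Ms s \<and> rank (F - G) = 1 \<and>
           0 < \<mu> \<and> \<mu> < 1 \<and> N = \<mu> *\<^sub>R F + (1 - \<mu>) *\<^sub>R G \<and>
           norm (N *v perp s) = norm (F *v perp s) \<and>
           norm (F *v perp s) = norm (G *v perp s)"
proof -
  have detN: "det N = 1" and wle: "norm (N *v s) < 1"
    using assms(2) by (auto simp: Ns_def Ms_def)
  have ss: "s$1 ^ 2 + s$2 ^ 2 = 1"
    using assms(1) by (simp add: norm_eq_sqrt_inner inner_vec_def sum_2 power2_eq_square)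
  define u where "u = N *v perp s"
  define w where "w = N *v s"
  define P where "P = ((\<chi> i j. u$i * s$j) :: real^2^2)"
  define M where "M = (\<lambda>t::real. N + t *\<^sub>R P)"
  have Ms: "M t *v s = w + t *\<^sub>R u" for t
    using a2[of N t u s] ss by (simp add: M_def P_def w_def)
  have Mm: "M t *v perp s = u" for t
    using a3[of N t u s] by (simp add: M_def P_def u_def)
  have Md: "det (M t) = 1" for t
    using Md_lem[of N t s] detN by (simp add: M_def P_def u_def)
  have s0: "s \<noteq> 0" using assms(1) by auto
  have p1: "perp s $ 1 = - s$2" and p2: "perp s $ 2 = s$1" by (simp_all add: perp_def)
  have ps0: "perp s \<noteq> 0"
  proof
    assume "perp s = 0"
    hence "s$1 = 0" "s$2 = 0" using p1 p2 by auto
    thus False using ss by simp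
  qed
  have u0: "u \<noteq> 0"
  proof
    assume "u = 0"
    hence "\<exists>x. x \<noteq> 0 \<and> N *v x = 0" using ps0 u_def by auto
    hence "rank N \<noteq> CARD(2)" by (rule iffD1[OF matrix_nonfull_linear_equations_eq])
    moreover have "rank N \<le> CARD(2)" using rank_bound[of N] by simp
    ultimately have "rank N < CARD(2)" by linarith
    hence "det N = 0" using det_eq_0_rank by blast
    thus False using detN by simp
  qed
  define A where "A = norm u ^ 2"
  define B where "B = 2 * (w \<bullet> u)"
  define C where "C = norm w ^ 2 - 1"
  have A0: "A > 0" using u0 by (simp add: A_def)
  have C0: "C < 0" using wle by (simp add: C_def w_def abs_square_less_1)
  define D where "D = B^2 - 4*A*C"
  have D0: "D > B^2" using A0 C0 by (simp add: D_def mult_pos_neg)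
  have sD: "sqrt D > \<bar>B\<bar>" using D0 by (metis real_sqrt_abs real_sqrt_less_mono)
  have sD2: "sqrt D ^ 2 = D" using D0 by (smt (verit) real_sqrt_pow2 zero_le_power2)
  define t1 where "t1 = (-B - sqrt D) / (2*A)"
  define t2 where "t2 = (-B + sqrt D) / (2*A)"
  have t1n: "t1 < 0" using sD A0 by (simp add: t1_def divide_neg_pos)
  have t2p: "t2 > 0" using sD A0 by (simp add: t2_def)
  have root: "A * t^2 + B*t + C = 0" if "t = t1 \<or> t = t2" for t
    using root_lem[OF A0 sD2 D_def] that unfolding t1_def t2_def by blast
  have normq: "norm (w + t *\<^sub>R u) ^ 2 = A * t^2 + B*t + C + 1" for t
    unfolding A_def B_def C_def power2_norm_eq_inner
    by (simp add: inner_add_left inner_add_right inner_commute algebra_simps power2_eq_square)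
  have inM: "M t \<in> Ms s" if "t = t1 \<or> t = t2" for t
  proof -
    have "norm (w + t *\<^sub>R u) ^ 2 = 1" using normq root[OF that] by simp
    hence "norm (w + t *\<^sub>R u) = 1" using norm_ge_zero[of "w + t *\<^sub>R u"] by (auto simp: power2_eq_1_iff)
    thus ?thesis using Ms Md by (simp add: Ms_def)
  qed
  define \<mu> where "\<mu> = - t1 / (t2 - t1)"
  have mu0: "0 < \<mu>" "\<mu> < 1" using t1n t2p by (auto simp: \<mu>_def field_simps)
  have comb: "\<mu> * t2 + (1 - \<mu>) * t1 = 0" using t1n t2p by (simp add: \<mu>_def field_simps)
  have "\<mu> *\<^sub>R M t2 + (1 - \<mu>) *\<^sub>R M t1 = N + (\<mu> * t2 + (1 - \<mu>) * t1) *\<^sub>R P"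
    by (simp add: M_def algebra_simps)
  hence eqN: "N = \<mu> *\<^sub>R M t2 + (1 - \<mu>) *\<^sub>R M t1" using comb by simp
  have "M t2 - M t1 = (\<chi> i j. ((t2 - t1) *\<^sub>R u)$i * s$j)"
    by (simp add: M_def P_def vec_eq_iff algebra_simps)
  moreover have "(t2 - t1) *\<^sub>R u \<noteq> 0" using u0 t1n t2p by simp
  ultimately have rk: "rank (M t2 - M t1) = 1" using rank_outer[of "(t2 - t1) *\<^sub>R u" s] s0 by simp
  show ?thesis
    apply (rule exI[of _ "M t2"], rule exI[of _ "M t1"], rule exI[of _ \<mu>])
    using inM rk mu0 eqN Mm u_def by auto
qed

end
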